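(* Let $z(t)$, $t\in[0,T]$, be a càdlàg Markov process with values in $\mathbb{R}^m$ on $(\Omega,\mathcal{F},P)$, let $D\subset\mathbb{R}^m$ be closed, and let $\tau_t\triangleq\inf\{s\in[t,T]: z(s)\notin D\}$ (with $\inf\emptyset=\infty$). Let $0=t_0<t_1<\dots<t_k=T$ be a partition and write $z_i=z(t_i)$, $\tau_i=\tau_{t_i}$. Let $\bar b_i$ denote the law of $z_i$, and define the (regular conditional) function $\bar\Psi_i(\zeta)\triangleq P(\tau_0\ge t_i,\ z_i\in D\mid z_i=\zeta)$. For a finite (not necessarily normalized) measure $\mu$ on $\mathbb{R}^m$ define $$\Phi(t_i,t_{i+1};\mu)\triangleq\int_{\mathbb{R}^m} P(\tau_i<t_{i+1}\mid z_i=\zeta)\,\mu(d\zeta).$$ Then the exit cumulant $F(T)\triangleq P\big(\exists s\in[0,T]: z(s)\notin D\big)$ satisfies $$F(T)=\sum_{i=0}^{k-1}\Phi\big(t_i,t_{i+1};\bar\Psi_i\,\bar b_i\big)+\sum_{i=0}^{k}P\big(\tau_0=t_i,\ z_i\in D^c\big),$$ where $\bar\Psi_i\bar b_i$ denotes the measure $\bar\Psi_i(\zeta)\,\bar b_i(d\zeta)$.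
   Context: $D^c$ is the complement of $D$. The Markov property is used in the sense that, conditionally on $z(t_i)$, the future path $(z(s))_{s\ge t_i}$ is independent of $(z(s))_{s\le t_i}$. *)

theory Defs
  imports "HOL-Probability.Probability"
begin

definition exit_time ::
  "(real \<Rightarrow> 'w \<Rightarrow> 'a) \<Rightarrow> 'a set \<Rightarrow> real \<Rightarrow> real \<Rightarrow> 'w \<Rightarrow> ereal" where
  "exit_time z D T t \<omega> =
     (if \<exists>s\<in>{t..T}. z s \<omega> \<notin> D then ereal (Inf {s\<in>{t..T}. z s \<omega> \<notin> D}) else \<infinity>)"

definition cadlag_on :: "real \<Rightarrow> (real \<Rightarrow> 'a::topological_space) \<Rightarrow> bool" where
  "cadlag_on T f \<longleftrightarrow>
     (\<forall>t\<in>{0..<T}. continuous (at_right t) f) \<and>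
     (\<forall>t\<in>{0<..T}. \<exists>l. (f \<longlongrightarrow> l) (at_left t))"

definition past_alg :: "'w measure \<Rightarrow> (real \<Rightarrow> 'w \<Rightarrow> 'a::topological_space) \<Rightarrow> real \<Rightarrow> 'w measure" where
  "past_alg M z t = sigma (space M) {z s -` B \<inter> space M | s B. s \<in> {0..t} \<and> B \<in> sets borel}"

definition future_alg :: "'w measure \<Rightarrow> (real \<Rightarrow> 'w \<Rightarrow> 'a::topological_space) \<Rightarrow> real \<Rightarrow> real \<Rightarrow> 'w measure" where
  "future_alg M z t T = sigma (space M) {z s -` B \<inter> space M | s B. s \<in> {t..T} \<and> B \<in> sets borel}"

definition markov_on :: "'w measure \<Rightarrow> real \<Rightarrow> (real \<Rightarrow> 'w \<Rightarrow> 'a::topological_space) \<Rightarrow> bool" where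
  "markov_on M T z \<longleftrightarrow>
     (\<forall>t\<in>{0..T}. \<forall>A\<in>sets (past_alg M z t). \<forall>B\<in>sets (future_alg M z t T).
        AE \<omega> in M. real_cond_exp M (vimage_algebra (space M) (z t) borel) (indicator (A \<inter> B)) \<omega> =
          real_cond_exp M (vimage_algebra (space M) (z t) borel) (indicator A) \<omega> *
          real_cond_exp M (vimage_algebra (space M) (z t) borel) (indicator B) \<omega>)"

text \<open>g is a (regular) version of zeta |-> P(A | X = zeta): a Borel function with values
  in [0,1] such that P(A, X in B) = integral over B of g with respect to the law of X.\<close>
definition cond_prob_fn :: "'w measure \<Rightarrow> ('w \<Rightarrow> 'a::topological_space) \<Rightarrow> 'w set \<Rightarrow> ('a \<Rightarrow> real) \<Rightarrow> bool" where
  "cond_prob_fn M X A g \<longleftrightarrow>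
     g \<in> borel_measurable borel \<and> (\<forall>\<zeta>. 0 \<le> g \<zeta> \<and> g \<zeta> \<le> 1) \<and>
     (\<forall>B\<in>sets borel. measure M (A \<inter> X -` B \<inter> space M) = (LINT \<zeta>:B|distr M borel X. g \<zeta>))"

end

theory Submission
  imports Defs
begin


lemma cond_ce:
  assumes P: "prob_space M" and X[measurable]: "X \<in> borel_measurable M" and A[measurable]: "A \<in> sets M"
    and c: "cond_prob_fn M X A g"
  shows "AE \<omega> in M. real_cond_exp M (vimage_algebra (space M) X borel) (indicator A) \<omega> = g (X \<omega>)"
proof -
  interpret prob_space M by fact
  let ?N = "vimage_algebra (space M) X borel"
  have Xf: "X \<in> space M \<rightarrow> space borel" by simp
  have sN: "sets ?N = {X -` B \<inter> space M | B. B \<in> sets borel}"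
    using sets_vimage_algebra2[OF Xf] by simp
  have sub: "subalgebra M ?N"
    unfolding subalgebra_def using sN by (auto simp: space_vimage_algebra)
  interpret finite_measure_subalgebra M ?N
    by unfold_locales (rule sub)
  have gm[measurable]: "g \<in> borel_measurable borel" and g01: "\<And>x. 0 \<le> g x \<and> g x \<le> 1"
    and eq: "\<And>B. B \<in> sets borel \<Longrightarrow> measure M (A \<inter> X -` B \<inter> space M) = (LINT \<zeta>:B|distr M borel X. g \<zeta>)"
    using c unfolding cond_prob_fn_def by auto
  have gXN: "(\<lambda>\<omega>. g (X \<omega>)) \<in> borel_measurable ?N"
    using measurable_comp[OF measurable_vimage_algebra1[OF Xf] gm] by (simp add: comp_def)
  have intg: "integrable M (\<lambda>\<omega>. g (X \<omega>))"
    by (rule integrable_const_bound[where B=1]) (use g01 in auto)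
  have intA: "integrable M (indicator A :: 'a \<Rightarrow> real)"
    using A by (simp add: integrable_indicator_iff Int_absorb2 sets.sets_into_space less_top[symmetric])
  show ?thesis
  proof (rule real_cond_exp_charact)
    fix C assume "C \<in> sets ?N"
    then obtain B where B: "B \<in> sets borel" and C: "C = X -` B \<inter> space M" using sN by auto
    have "(\<integral>x\<in>C. indicator A x \<partial>M) = measure M (A \<inter> X -` B \<inter> space M)"
    proof -
      have m: "A \<inter> X -` B \<inter> space M \<in> sets M" using B by measurable
      have "(\<lambda>x. indicator C x *\<^sub>R indicator A x) = (indicator (A \<inter> X -` B \<inter> space M) :: 'a \<Rightarrow> real)"
        unfolding C by (auto simp: indicator_def fun_eq_iff)
      then show ?thesis unfolding set_lebesgue_integral_def using m
        by (simp add: measure_def)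
    qed
    also have "\<dots> = (LINT \<zeta>:B|distr M borel X. g \<zeta>)" by (rule eq[OF B])
    also have "\<dots> = (\<integral>x\<in>C. g (X x) \<partial>M)"
    proof -
      have mm: "(\<lambda>x. indicator B x *\<^sub>R g x) \<in> borel_measurable borel" using B by measurable
      show ?thesis unfolding C set_lebesgue_integral_def
      by (subst integral_distr[OF X mm]) (auto intro!: Bochner_Integration.integral_cong simp: indicator_def B)
    qed
    finally show "(\<integral>x\<in>C. indicator A x \<partial>M) = (\<integral>x\<in>C. g (X x) \<partial>M)" .
  qed (auto simp: gXN intg intA)
qed

lemma markov_step:
  assumes P: "prob_space M" and X[measurable]: "X \<in> borel_measurable M"
    and A[measurable]: "A \<in> sets M" and B[measurable]: "B \<in> sets M"
    and cA: "cond_prob_fn M X A g" and cB: "cond_prob_fn M X B h"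
    and mk: "AE \<omega> in M. real_cond_exp M (vimage_algebra (space M) X borel) (indicator (A \<inter> B)) \<omega> =
          real_cond_exp M (vimage_algebra (space M) X borel) (indicator A) \<omega> *
          real_cond_exp M (vimage_algebra (space M) X borel) (indicator B) \<omega>"
  shows "measure M (A \<inter> B) = (\<integral>\<zeta>. h \<zeta> \<partial>(density (distr M borel X) (\<lambda>\<zeta>. ennreal (g \<zeta>))))"
proof -
  interpret prob_space M by fact
  let ?N = "vimage_algebra (space M) X borel"
  have Xf: "X \<in> space M \<rightarrow> space borel" by simp
  have sN: "sets ?N = {X -` B \<inter> space M | B. B \<in> sets borel}"
    using sets_vimage_algebra2[OF Xf] by simp
  have sub: "subalgebra M ?N"
    unfolding subalgebra_def using sN by (auto simp: space_vimage_algebra)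
  interpret finite_measure_subalgebra M ?N
    by unfold_locales (rule sub)
  have gm[measurable]: "g \<in> borel_measurable borel" and g0: "\<And>x. 0 \<le> g x"
    using cA unfolding cond_prob_fn_def by auto
  have hm[measurable]: "h \<in> borel_measurable borel"
    using cB unfolding cond_prob_fn_def by auto
  have AB: "A \<inter> B \<in> sets M" by simp
  have intAB: "integrable M (indicator (A \<inter> B) :: 'a \<Rightarrow> real)"
    using AB by (simp add: integrable_indicator_iff Int_absorb2 sets.sets_into_space less_top[symmetric])
  have "measure M (A \<inter> B) = (\<integral>\<omega>. indicator (A \<inter> B) \<omega> \<partial>M)"
    using AB by (simp add: measure_def)
  also have "\<dots> = (\<integral>\<omega>. real_cond_exp M ?N (indicator (A \<inter> B)) \<omega> \<partial>M)"
    using real_cond_exp_int(2)[OF intAB] by simp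
  also have "\<dots> = (\<integral>\<omega>. g (X \<omega>) * h (X \<omega>) \<partial>M)"
  proof (rule integral_cong_AE)
    show "(\<lambda>\<omega>. g (X \<omega>) * h (X \<omega>)) \<in> borel_measurable M" by measurable
    show "real_cond_exp M ?N (indicator (A \<inter> B)) \<in> borel_measurable M"
      using borel_measurable_cond_exp2 by blast
    show "AE \<omega> in M. real_cond_exp M ?N (indicator (A \<inter> B)) \<omega> = g (X \<omega>) * h (X \<omega>)"
      using mk cond_ce[OF P X A cA] cond_ce[OF P X B cB] by eventually_elim simp
  qed
  also have "\<dots> = (\<integral>\<zeta>. g \<zeta> * h \<zeta> \<partial>distr M borel X)"
    by (subst integral_distr) auto
  also have "\<dots> = (\<integral>\<zeta>. h \<zeta> \<partial>(density (distr M borel X) (\<lambda>\<zeta>. ennreal (g \<zeta>))))"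
    by (subst integral_density) (auto simp: g0)
  finally show ?thesis .
qed



lemma X1:
  assumes "a \<le> T"
  shows "exit_time z D T 0 \<omega> \<ge> ereal a \<longleftrightarrow> (\<forall>s\<in>{0..<a}. z s \<omega> \<in> D)"
proof (cases "\<exists>s\<in>{0..T}. z s \<omega> \<notin> D")
  case True
  let ?S = "{s\<in>{0..T}. z s \<omega> \<notin> D}"
  have ne: "?S \<noteq> {}" using True by auto
  have bdd: "bdd_below ?S" by (auto intro!: bdd_belowI[where m=0])
  have "exit_time z D T 0 \<omega> = ereal (Inf ?S)" using True by (simp add: exit_time_def)
  moreover have "Inf ?S \<ge> a \<longleftrightarrow> (\<forall>s\<in>?S. a \<le> s)"
    using ne bdd by (meson cInf_greatest cInf_lower order_trans)
  ultimately show ?thesis using assms by force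
next
  case False
  then show ?thesis using assms by (auto simp: exit_time_def)
qed

lemma X2:
  assumes "b \<le> T"
  shows "exit_time z D T t \<omega> < ereal b \<longleftrightarrow> (\<exists>s\<in>{t..<b}. z s \<omega> \<notin> D)"
proof (cases "\<exists>s\<in>{t..T}. z s \<omega> \<notin> D")
  case True
  let ?S = "{s\<in>{t..T}. z s \<omega> \<notin> D}"
  have ne: "?S \<noteq> {}" using True by auto
  have bdd: "bdd_below ?S" by (auto intro!: bdd_belowI[where m=t])
  have "exit_time z D T t \<omega> = ereal (Inf ?S)" using True by (simp add: exit_time_def)
  moreover have "Inf ?S < b \<longleftrightarrow> (\<exists>s\<in>?S. s < b)"
    using ne bdd by (simp add: cInf_less_iff)
  ultimately show ?thesis using assms by force
next
  case False
  then show ?thesis using assms by (auto simp: exit_time_def)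
qed

lemma X3:
  assumes "0 \<le> a" "a \<le> T"
  shows "(exit_time z D T 0 \<omega> = ereal a \<and> z a \<omega> \<notin> D) \<longleftrightarrow> (\<forall>s\<in>{0..<a}. z s \<omega> \<in> D) \<and> z a \<omega> \<notin> D"
proof (cases "z a \<omega> \<in> D")
  case False
  let ?S = "{s\<in>{0..T}. z s \<omega> \<notin> D}"
  have aS: "a \<in> ?S" using False assms by auto
  have bdd: "bdd_below ?S" by (auto intro!: bdd_belowI[where m=0])
  have ex: "exit_time z D T 0 \<omega> = ereal (Inf ?S)" using aS by (auto simp: exit_time_def)
  show ?thesis
  proof
    assume h: "exit_time z D T 0 \<omega> = ereal a \<and> z a \<omega> \<notin> D"
    then have "Inf ?S = a" using ex by simp
    then have "\<forall>s\<in>?S. a \<le> s" using bdd cInf_lower by metis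
    then show "(\<forall>s\<in>{0..<a}. z s \<omega> \<in> D) \<and> z a \<omega> \<notin> D" using False assms by force
  next
    assume h: "(\<forall>s\<in>{0..<a}. z s \<omega> \<in> D) \<and> z a \<omega> \<notin> D"
    have "Inf ?S = a"
      by (rule cInf_eq_minimum[OF aS]) (use h in force)
    then show "exit_time z D T 0 \<omega> = ereal a \<and> z a \<omega> \<notin> D" using ex False by simp
  qed
qed simp

lemma rat_witness:
  fixes f :: "real \<Rightarrow> 'a::topological_space"
  assumes "\<forall>u\<in>{0..<T}. continuous (at_right u) f" "open U" "0 \<le> s" "s < b" "b \<le> T" "f s \<in> U"
  shows "\<exists>q::rat. s < of_rat q \<and> of_rat q < b \<and> f (of_rat q) \<in> U"
proof -
  have "(f \<longlongrightarrow> f s) (at_right s)"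
    using assms(1,3,4,5) by (simp add: continuous_within)
  then have "eventually (\<lambda>x. f x \<in> U) (at_right s)"
    using assms(2,6) topological_tendstoD by blast
  then obtain c where c: "c > s" "\<And>y. y > s \<Longrightarrow> y < c \<Longrightarrow> f y \<in> U"
    by (auto simp: eventually_at_right_field)
  obtain q :: rat where q: "s < of_rat q" "of_rat q < min b c"
    using of_rat_dense[of s "min b c"] c assms(4) by auto
  then show ?thesis using c by auto
qed



lemma good_rat:
  fixes f :: "real \<Rightarrow> 'a::topological_space"
  assumes cad: "\<forall>u\<in>{0..<T}. continuous (at_right u) f" and D: "closed D" and "a \<le> T"
  shows "(\<forall>s\<in>{0..<a}. f s \<in> D) \<longleftrightarrow> (\<forall>q::rat. 0 \<le> real_of_rat q \<and> of_rat q < a \<longrightarrow> f (of_rat q) \<in> D)"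
proof
  assume h: "\<forall>q::rat. 0 \<le> real_of_rat q \<and> of_rat q < a \<longrightarrow> f (of_rat q) \<in> D"
  show "\<forall>s\<in>{0..<a}. f s \<in> D"
  proof (rule ccontr)
    assume "\<not> (\<forall>s\<in>{0..<a}. f s \<in> D)"
    then obtain s where s: "0 \<le> s" "s < a" "f s \<in> -D" by auto
    from rat_witness[OF cad _ s(1,2) assms(3) s(3)] D obtain q :: rat where
      q: "s < of_rat q" "of_rat q < a" "f (of_rat q) \<in> -D" by auto
    have "0 \<le> (of_rat q :: real)" using q(1) s(1) by linarith
    with h q show False by auto
  qed
qed auto

lemma bad_rat:
  fixes f :: "real \<Rightarrow> 'a::topological_space"
  assumes cad: "\<forall>u\<in>{0..<T}. continuous (at_right u) f" and D: "closed D" and "0 \<le> a" "b \<le> T"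
  shows "(\<exists>s\<in>{a..<b}. f s \<notin> D) \<longleftrightarrow> (a < b \<and> f a \<notin> D) \<or> (\<exists>q::rat. a \<le> real_of_rat q \<and> of_rat q < b \<and> f (of_rat q) \<notin> D)"
proof
  assume "\<exists>s\<in>{a..<b}. f s \<notin> D"
  then obtain s where s: "a \<le> s" "s < b" "f s \<in> -D" by auto
  from rat_witness[OF cad _ _ s(2) assms(4) s(3)] D s(1) assms(3) obtain q :: rat where
    "s < of_rat q" "of_rat q < b" "f (of_rat q) \<in> -D" by auto
  with s show "(a < b \<and> f a \<notin> D) \<or> (\<exists>q::rat. a \<le> real_of_rat q \<and> of_rat q < b \<and> f (of_rat q) \<notin> D)"
    by (intro disjI2 exI[of _ q]) auto
qed auto

lemma E_rat:
  fixes f :: "real \<Rightarrow> 'a::topological_space"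
  assumes cad: "\<forall>u\<in>{0..<T}. continuous (at_right u) f" and D: "closed D" and "0 \<le> T"
  shows "(\<exists>s\<in>{0..T}. f s \<notin> D) \<longleftrightarrow> f T \<notin> D \<or> (\<exists>q::rat. 0 \<le> real_of_rat q \<and> of_rat q < T \<and> f (of_rat q) \<notin> D)"
proof
  assume "\<exists>s\<in>{0..T}. f s \<notin> D"
  then obtain s where s: "0 \<le> s" "s \<le> T" "f s \<in> -D" by auto
  show "f T \<notin> D \<or> (\<exists>q::rat. 0 \<le> real_of_rat q \<and> of_rat q < T \<and> f (of_rat q) \<notin> D)"
  proof (cases "s = T")
    case True then show ?thesis using s by auto
  next
    case False
    then have "s < T" using s by auto
    from rat_witness[OF cad _ s(1) this order_refl s(3)] D obtain q :: rat where
      q: "s < of_rat q" "of_rat q < T" "f (of_rat q) \<in> -D" by auto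
    have "0 \<le> (of_rat q :: real)" using q(1) s(1) by linarith
    with q show ?thesis by auto
  qed
next
  assume "f T \<notin> D \<or> (\<exists>q::rat. 0 \<le> real_of_rat q \<and> of_rat q < T \<and> f (of_rat q) \<notin> D)"
  then show "\<exists>s\<in>{0..T}. f s \<notin> D" using assms(3) by (auto intro: less_imp_le)
qed

lemma pred_sigma_gen:
  assumes "G \<subseteq> Pow (space M)" "z r -` B \<inter> space M \<in> G"
  shows "Measurable.pred (sigma (space M) G) (\<lambda>\<omega>. z r \<omega> \<in> B)"
proof -
  have "{x \<in> space M. z r x \<in> B} = z r -` B \<inter> space M" by auto
  moreover have "space (sigma (space M) G) = space M" "sets (sigma (space M) G) = sigma_sets (space M) G"
    using assms(1) by simp_all
  ultimately show ?thesis using assms(2) unfolding pred_def by (simp add: sigma_sets.Basic)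
qed

lemma past_pred:
  assumes "0 \<le> r" "r \<le> t" "B \<in> sets borel"
  shows "Measurable.pred (past_alg M z t) (\<lambda>\<omega>. z r \<omega> \<in> B)"
  unfolding past_alg_def using assms by (intro pred_sigma_gen) auto

lemma future_pred:
  assumes "t \<le> r" "r \<le> T" "B \<in> sets borel"
  shows "Measurable.pred (future_alg M z t T) (\<lambda>\<omega>. z r \<omega> \<in> B)"
  unfolding future_alg_def using assms by (intro pred_sigma_gen) auto

lemma past_sub:
  assumes "\<forall>s\<in>{0..T}. z s \<in> borel_measurable M" "t \<le> T"
  shows "sets (past_alg M z t) \<subseteq> sets M" "space (past_alg M z t) = space M"
proof -
  let ?G = "{z s -` B \<inter> space M | s B. s \<in> {0..t} \<and> B \<in> sets borel}"
  have G: "?G \<subseteq> Pow (space M)" by auto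
  have "?G \<subseteq> sets M" using assms by (auto intro: measurable_sets)
  then show "sets (past_alg M z t) \<subseteq> sets M" unfolding past_alg_def
    using G sets.sigma_sets_subset by (simp add: sets.sigma_sets_subset)
  show "space (past_alg M z t) = space M" unfolding past_alg_def using G by simp
qed

lemma future_sub:
  assumes "\<forall>s\<in>{0..T}. z s \<in> borel_measurable M" "0 \<le> t"
  shows "sets (future_alg M z t T) \<subseteq> sets M" "space (future_alg M z t T) = space M"
proof -
  let ?G = "{z s -` B \<inter> space M | s B. s \<in> {t..T} \<and> B \<in> sets borel}"
  have G: "?G \<subseteq> Pow (space M)" by auto
  have "?G \<subseteq> sets M" using assms by (auto intro: measurable_sets)
  then show "sets (future_alg M z t T) \<subseteq> sets M" unfolding future_alg_def
    using G sets.sigma_sets_subset by (simp add: sets.sigma_sets_subset)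
  show "space (future_alg M z t T) = space M" unfolding future_alg_def using G by simp
qed

lemma pred_imp_const: "(K \<Longrightarrow> Measurable.pred N P) \<Longrightarrow> Measurable.pred N (\<lambda>x. K \<longrightarrow> P x)"
  by (cases K) (auto simp: pred_def)

lemma pred_conj_const: "(K \<Longrightarrow> Measurable.pred N P) \<Longrightarrow> Measurable.pred N (\<lambda>x. K \<and> P x)"
  by (cases K) (auto simp: pred_def)



theorem mainTheorem2:
  fixes M :: "'w measure" and z :: "real \<Rightarrow> 'w \<Rightarrow> real ^ 'm" and D :: "(real ^ 'm) set"
    and T :: real and k :: nat and t :: "nat \<Rightarrow> real"
    and \<Psi> q :: "nat \<Rightarrow> real ^ 'm \<Rightarrow> real"
  assumes "prob_space M"
    and "\<forall>s\<in>{0..T}. z s \<in> borel_measurable M"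
    and "\<forall>\<omega>\<in>space M. cadlag_on T (\<lambda>s. z s \<omega>)"
    and "markov_on M T z"
    and "closed D"
    and "t 0 = 0" and "t k = T" and "\<forall>i<k. t i < t (Suc i)"
    and "\<forall>i<k. cond_prob_fn M (z (t i))
            {\<omega>\<in>space M. exit_time z D T 0 \<omega> \<ge> ereal (t i) \<and> z (t i) \<omega> \<in> D} (\<Psi> i)"
    and "\<forall>i<k. cond_prob_fn M (z (t i))
            {\<omega>\<in>space M. exit_time z D T (t i) \<omega> < ereal (t (Suc i))} (q i)"
  shows "measure M {\<omega>\<in>space M. \<exists>s\<in>{0..T}. z s \<omega> \<notin> D} =
           (\<Sum>i<k. \<integral>\<zeta>. q i \<zeta> \<partial>(density (distr M borel (z (t i))) (\<lambda>\<zeta>. ennreal (\<Psi> i \<zeta>))))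
         + (\<Sum>i\<le>k. measure M {\<omega>\<in>space M. exit_time z D T 0 \<omega> = ereal (t i) \<and> z (t i) \<omega> \<notin> D})"
proof -
  note P = assms(1)
  interpret prob_space M by fact
  have zm: "\<And>s. s \<in> {0..T} \<Longrightarrow> z s \<in> borel_measurable M" using assms(2) by auto
  have cad: "\<And>\<omega>. \<omega> \<in> space M \<Longrightarrow> \<forall>u\<in>{0..<T}. continuous (at_right u) (\<lambda>s. z s \<omega>)"
    using assms(3) unfolding cadlag_on_def by auto
  have Dc: "closed D" by fact
  have Db: "D \<in> sets borel" using Dc by (rule borel_closed)
  have tmono: "t i < t j" if "i < j" "j \<le> k" for i j
    using that
  proof (induction j)
    case 0 then show ?case by simp
  next
    case (Suc j)
    then have "t j < t (Suc j)" using assms(8) by auto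
    then show ?case using Suc by (cases "i = j") auto
  qed
  have tle: "t i \<le> t j" if "i \<le> j" "j \<le> k" for i j
    using tmono[of i j] that by (cases "i = j") auto
  have t0: "0 \<le> t i" if "i \<le> k" for i using tle[of 0 i] that assms(6) by simp
  have tT: "t i \<le> T" if "i \<le> k" for i using tle[of i k] that assms(7) by simp
  define Good where "Good a \<omega> \<longleftrightarrow> (\<forall>s\<in>{0..<a}. z s \<omega> \<in> D)" for a \<omega>
  define A where "A i = {\<omega>\<in>space M. exit_time z D T 0 \<omega> \<ge> ereal (t i) \<and> z (t i) \<omega> \<in> D}" for i
  define B where "B i = {\<omega>\<in>space M. exit_time z D T (t i) \<omega> < ereal (t (Suc i))}" for i
  define C where "C i = {\<omega>\<in>space M. exit_time z D T 0 \<omega> = ereal (t i) \<and> z (t i) \<omega> \<notin> D}" for i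
  define E where "E = {\<omega>\<in>space M. \<exists>s\<in>{0..T}. z s \<omega> \<notin> D}"
  have AE: "A i = {\<omega>\<in>space M. Good (t i) \<omega> \<and> z (t i) \<omega> \<in> D}" if "i \<le> k" for i
    unfolding A_def Good_def using X1[OF tT[OF that], of z D] by auto
  have BE: "B i = {\<omega>\<in>space M. \<exists>s\<in>{t i..<t (Suc i)}. z s \<omega> \<notin> D}" if "i < k" for i
  proof -
    have "t (Suc i) \<le> T" using tT[of "Suc i"] that by simp
    from X2[OF this, where z=z and D=D and t="t i"] show ?thesis unfolding B_def by auto
  qed
  have CE: "C i = {\<omega>\<in>space M. Good (t i) \<omega> \<and> z (t i) \<omega> \<notin> D}" if "i \<le> k" for i
    unfolding C_def Good_def using X3[OF t0[OF that] tT[OF that], where z=z and D=D] by auto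
  have Grat: "Good (t i) \<omega> \<longleftrightarrow> (\<forall>q::rat. 0 \<le> real_of_rat q \<and> of_rat q < t i \<longrightarrow> z (of_rat q) \<omega> \<in> D)"
    if "i \<le> k" "\<omega> \<in> space M" for i \<omega>
    unfolding Good_def using good_rat[OF cad[OF that(2)] Dc tT[OF that(1)]] by simp
  have Brat: "(\<exists>s\<in>{t i..<t (Suc i)}. z s \<omega> \<notin> D) \<longleftrightarrow> (t i < t (Suc i) \<and> z (t i) \<omega> \<notin> D) \<or>
       (\<exists>q::rat. t i \<le> real_of_rat q \<and> of_rat q < t (Suc i) \<and> z (of_rat q) \<omega> \<notin> D)"
    if "i < k" "\<omega> \<in> space M" for i \<omega>
    using bad_rat[OF cad[OF that(2)] Dc t0[of i] tT[of "Suc i"]] that by simp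
  have Apast: "A i \<in> sets (past_alg M z (t i))" if "i \<le> k" for i
  proof -
    have eqA: "A i = {\<omega>\<in>space (past_alg M z (t i)). (\<forall>q::rat. 0 \<le> real_of_rat q \<and> of_rat q < t i \<longrightarrow> z (of_rat q) \<omega> \<in> D) \<and> z (t i) \<omega> \<in> D}"
    proof (rule set_eqI)
      fix \<omega>
      have sp: "space (past_alg M z (t i)) = space M" using past_sub(2)[OF assms(2) tT[OF that]] .
      show "\<omega> \<in> A i \<longleftrightarrow> \<omega> \<in> {\<omega>\<in>space (past_alg M z (t i)). (\<forall>q::rat. 0 \<le> real_of_rat q \<and> of_rat q < t i \<longrightarrow> z (of_rat q) \<omega> \<in> D) \<and> z (t i) \<omega> \<in> D}"
      proof (cases "\<omega> \<in> space M")
        case True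
        show ?thesis unfolding AE[OF that] sp mem_Collect_eq Grat[OF that True] by (simp only: True simp_thms)
      next
        case False
        show ?thesis unfolding AE[OF that] sp mem_Collect_eq using False by simp
      qed
    qed
    have prA: "Measurable.pred (past_alg M z (t i)) (\<lambda>\<omega>. (\<forall>q::rat. 0 \<le> real_of_rat q \<and> of_rat q < t i \<longrightarrow> z (of_rat q) \<omega> \<in> D) \<and> z (t i) \<omega> \<in> D)"
      apply (rule pred_intros_logic(3))
       apply (rule pred_intros_countable(1))
       apply (rule pred_intros_imp')
       apply (rule past_pred)
         apply (auto simp: Db t0[OF that])[3]
      apply (rule past_pred)
        apply (auto simp: Db t0[OF that])
      done
    show ?thesis unfolding eqA by (rule predE[OF prA])
  qed
  have Bfut: "B i \<in> sets (future_alg M z (t i) T)" if "i < k" for i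
  proof -
    have eqB: "B i = {\<omega>\<in>space (future_alg M z (t i) T). (t i < t (Suc i) \<and> z (t i) \<omega> \<notin> D) \<or>
       (\<exists>q::rat. t i \<le> real_of_rat q \<and> of_rat q < t (Suc i) \<and> z (of_rat q) \<omega> \<notin> D)}"
    proof (rule set_eqI)
      fix \<omega>
      have "0 \<le> t i" using t0[of i] that by simp
      then have sp: "space (future_alg M z (t i) T) = space M" using future_sub(2)[OF assms(2)] by blast
      show "\<omega> \<in> B i \<longleftrightarrow> \<omega> \<in> {\<omega>\<in>space (future_alg M z (t i) T). (t i < t (Suc i) \<and> z (t i) \<omega> \<notin> D) \<or>
       (\<exists>q::rat. t i \<le> real_of_rat q \<and> of_rat q < t (Suc i) \<and> z (of_rat q) \<omega> \<notin> D)}"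
      proof (cases "\<omega> \<in> space M")
        case True
        show ?thesis unfolding BE[OF that] sp mem_Collect_eq Brat[OF that True] by (simp only: True simp_thms)
      next
        case False
        show ?thesis unfolding BE[OF that] sp mem_Collect_eq using False by simp
      qed
    qed
    have prB: "Measurable.pred (future_alg M z (t i) T) (\<lambda>\<omega>. (t i < t (Suc i) \<and> z (t i) \<omega> \<notin> D) \<or>
       (\<exists>q::rat. t i \<le> real_of_rat q \<and> of_rat q < t (Suc i) \<and> z (of_rat q) \<omega> \<notin> D))"
      apply (rule pred_intros_logic(5))
       apply (rule pred_intros_conj1')
       apply (rule pred_intros_logic(2))
       apply (rule future_pred)
         apply (use that tT[of i] in \<open>auto simp: Db\<close>)[3]
      apply (rule pred_intros_countable(2))
      apply (rule pred_intros_conj1')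
      apply (rule pred_intros_conj1')
      apply (rule pred_intros_logic(2))
      apply (rule future_pred)
        apply (use that tT[of "Suc i"] in \<open>auto simp: Db\<close>)
      done
    show ?thesis unfolding eqB by (rule predE[OF prB])
  qed
  have AM: "A i \<in> sets M" if "i \<le> k" for i
    using Apast[OF that] past_sub(1)[OF assms(2) tT[OF that]] by auto
  have BM: "B i \<in> sets M" if "i < k" for i
    using Bfut[OF that] future_sub(1)[OF assms(2) t0[of i]] that by auto
  have CM: "C i \<in> sets M" if "i \<le> k" for i
  proof -
    have eqC: "C i = {\<omega>\<in>space (past_alg M z (t i)). (\<forall>q::rat. 0 \<le> real_of_rat q \<and> of_rat q < t i \<longrightarrow> z (of_rat q) \<omega> \<in> D) \<and> \<not> z (t i) \<omega> \<in> D}"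
    proof (rule set_eqI)
      fix \<omega>
      have sp: "space (past_alg M z (t i)) = space M" using past_sub(2)[OF assms(2) tT[OF that]] .
      show "\<omega> \<in> C i \<longleftrightarrow> \<omega> \<in> {\<omega>\<in>space (past_alg M z (t i)). (\<forall>q::rat. 0 \<le> real_of_rat q \<and> of_rat q < t i \<longrightarrow> z (of_rat q) \<omega> \<in> D) \<and> \<not> z (t i) \<omega> \<in> D}"
      proof (cases "\<omega> \<in> space M")
        case True
        show ?thesis unfolding CE[OF that] sp mem_Collect_eq Grat[OF that True] by (simp only: True simp_thms)
      next
        case False
        show ?thesis unfolding CE[OF that] sp mem_Collect_eq using False by simp
      qed
    qed
    have prC: "Measurable.pred (past_alg M z (t i)) (\<lambda>\<omega>. (\<forall>q::rat. 0 \<le> real_of_rat q \<and> of_rat q < t i \<longrightarrow> z (of_rat q) \<omega> \<in> D) \<and> \<not> z (t i) \<omega> \<in> D)"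
      apply (rule pred_intros_logic(3))
       apply (rule pred_intros_countable(1))
       apply (rule pred_intros_imp')
       apply (rule past_pred)
         apply (auto simp: Db t0[OF that])[3]
      apply (rule pred_intros_logic(2))
      apply (rule past_pred)
        apply (auto simp: Db t0[OF that])
      done
    have "C i \<in> sets (past_alg M z (t i))" unfolding eqC by (rule predE[OF prC])
    then show ?thesis using past_sub(1)[OF assms(2) tT[OF that]] by auto
  qed
  have Eeq: "E = (\<Union>i<k. A i \<inter> B i) \<union> (\<Union>i\<in>{..k}. C i)"
  proof
    show "E \<subseteq> (\<Union>i<k. A i \<inter> B i) \<union> (\<Union>i\<in>{..k}. C i)"
    proof
      fix \<omega> assume "\<omega> \<in> E"
      then have \<omega>: "\<omega> \<in> space M" and ex: "\<exists>s\<in>{0..T}. z s \<omega> \<notin> D" by (auto simp: E_def)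
      define J where "J = {j. j \<le> k \<and> Good (t j) \<omega>}"
      have finJ: "finite J" unfolding J_def by auto
      have "0 \<in> J" unfolding J_def Good_def using assms(6) by auto
      define j where "j = Max J"
      have jJ: "j \<in> J" unfolding j_def using finJ \<open>0 \<in> J\<close> Max_in by blast
      then have jk: "j \<le> k" and gj: "Good (t j) \<omega>" by (auto simp: J_def)
      show "\<omega> \<in> (\<Union>i<k. A i \<inter> B i) \<union> (\<Union>i\<in>{..k}. C i)"
      proof (cases "z (t j) \<omega> \<in> D")
        case False
        then have "\<omega> \<in> C j" using CE[OF jk] \<omega> gj by auto
        then show ?thesis using jk by auto
      next
        case True
        have "j \<noteq> k"
        proof
          assume "j = k"
          then have "\<forall>s\<in>{0..T}. z s \<omega> \<in> D" using gj True assms(7) unfolding Good_def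
            by (metis atLeastAtMost_iff atLeastLessThan_iff order_le_less)
          then show False using ex by auto
        qed
        then have jk': "j < k" using jk by auto
        have "Suc j \<notin> J"
        proof
          assume "Suc j \<in> J"
          then have "Suc j \<le> j" unfolding j_def using finJ by (simp add: Max_ge)
          then show False by simp
        qed
        then have "\<not> Good (t (Suc j)) \<omega>" using jk' by (auto simp: J_def)
        then obtain s where s: "0 \<le> s" "s < t (Suc j)" "z s \<omega> \<notin> D" by (auto simp: Good_def)
        have "t j \<le> s" using gj s unfolding Good_def by (meson atLeastLessThan_iff not_le)
        then have "\<omega> \<in> B j" using BE[OF jk'] \<omega> s by auto
        moreover have "\<omega> \<in> A j" using AE[OF jk] \<omega> gj True by auto
        ultimately show ?thesis using jk' by auto
      qed
    qed
  next
    show "(\<Union>i<k. A i \<inter> B i) \<union> (\<Union>i\<in>{..k}. C i) \<subseteq> E"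
    proof
      fix \<omega> assume "\<omega> \<in> (\<Union>i<k. A i \<inter> B i) \<union> (\<Union>i\<in>{..k}. C i)"
      then show "\<omega> \<in> E"
      proof
        assume "\<omega> \<in> (\<Union>i<k. A i \<inter> B i)"
        then obtain i where i: "i < k" "\<omega> \<in> B i" by auto
        then obtain s where s: "\<omega> \<in> space M" "t i \<le> s" "s < t (Suc i)" "z s \<omega> \<notin> D"
          using BE[OF i(1)] by auto
        have "0 \<le> s" using t0[of i] i s by auto
        moreover have "s \<le> T" using tT[of "Suc i"] i s by auto
        ultimately show ?thesis using s unfolding E_def by auto
      next
        assume "\<omega> \<in> (\<Union>i\<in>{..k}. C i)"
        then obtain i where i: "i \<le> k" "\<omega> \<in> C i" by auto
        then show ?thesis using CE[OF i(1)] t0[OF i(1)] tT[OF i(1)] unfolding E_def by auto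
      qed
    qed
  qed
  have badAB: "\<exists>s. t i \<le> s \<and> s < t (Suc i) \<and> z s \<omega> \<notin> D" if "i < k" "\<omega> \<in> A i \<inter> B i" for i \<omega>
    using BE[OF that(1)] that(2) by auto
  have goodA: "Good (t i) \<omega> \<and> z (t i) \<omega> \<in> D" if "i \<le> k" "\<omega> \<in> A i" for i \<omega>
    using AE[OF that(1)] that(2) by auto
  have goodC: "Good (t i) \<omega> \<and> z (t i) \<omega> \<notin> D" if "i \<le> k" "\<omega> \<in> C i" for i \<omega>
    using CE[OF that(1)] that(2) by auto
  have d1: "disjoint_family_on (\<lambda>i. A i \<inter> B i) {..<k}"
    unfolding disjoint_family_on_def
  proof (intro ballI impI)
    fix i j assume ij: "i \<in> {..<k}" "j \<in> {..<k}" "i \<noteq> j"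
    show "A i \<inter> B i \<inter> (A j \<inter> B j) = {}"
    proof (rule ccontr)
      assume "A i \<inter> B i \<inter> (A j \<inter> B j) \<noteq> {}"
      then obtain \<omega> where w: "\<omega> \<in> A i \<inter> B i" "\<omega> \<in> A j \<inter> B j" by auto
      have gen: False if "a < b" "b < k" "\<omega> \<in> A a \<inter> B a" "\<omega> \<in> A b \<inter> B b" for a b
      proof -
        have ak: "a < k" using that by simp
        obtain s where s: "t a \<le> s" "s < t (Suc a)" "z s \<omega> \<notin> D" using badAB[OF ak \<open>\<omega> \<in> A a \<inter> B a\<close>] by blast
        have "Good (t b) \<omega>" using goodA[of b] that by auto
        moreover have "t (Suc a) \<le> t b" using tle[of "Suc a" b] that by auto
        moreover have "0 \<le> s" using t0[of a] that s by auto
        ultimately show False using s unfolding Good_def by auto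
      qed
      show False using ij w gen by (cases "i < j") (auto, metis linorder_neqE_nat)
    qed
  qed
  have d2: "disjoint_family_on C {..k}"
    unfolding disjoint_family_on_def
  proof (intro ballI impI)
    fix i j assume ij: "i \<in> {..k}" "j \<in> {..k}" "i \<noteq> j"
    show "C i \<inter> C j = {}"
    proof (rule ccontr)
      assume "C i \<inter> C j \<noteq> {}"
      then obtain \<omega> where w: "\<omega> \<in> C i" "\<omega> \<in> C j" by auto
      have gen: False if "a < b" "b \<le> k" "\<omega> \<in> C a" "\<omega> \<in> C b" for a b
      proof -
        have "z (t a) \<omega> \<notin> D" using goodC[of a] that by auto
        moreover have "Good (t b) \<omega>" using goodC[of b] that by auto
        moreover have "t a < t b" using tmono that by auto
        moreover have "0 \<le> t a" using t0[of a] that by auto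
        ultimately show False unfolding Good_def by auto
      qed
      show False using ij w gen by (cases "i < j") (auto, metis linorder_neqE_nat)
    qed
  qed
  have d3: "(\<Union>i<k. A i \<inter> B i) \<inter> (\<Union>i\<in>{..k}. C i) = {}"
  proof (rule ccontr)
    assume "(\<Union>i<k. A i \<inter> B i) \<inter> (\<Union>i\<in>{..k}. C i) \<noteq> {}"
    then obtain \<omega> i j where w: "i < k" "\<omega> \<in> A i \<inter> B i" "j \<le> k" "\<omega> \<in> C j" by auto
    have gi: "Good (t i) \<omega> \<and> z (t i) \<omega> \<in> D" using goodA[of i] w by auto
    have gj: "Good (t j) \<omega> \<and> z (t j) \<omega> \<notin> D" using goodC[of j] w by auto
    show False
    proof (cases "j \<le> i")
      case True
      show False
      proof (cases "j = i")
        case True then show False using gi gj by auto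
      next
        case False
        then have "t j < t i" using tmono[of j i] \<open>j \<le> i\<close> w by auto
        then show False using gi gj t0[of j] w unfolding Good_def by auto
      qed
    next
      case False
      obtain s where s: "t i \<le> s" "s < t (Suc i)" "z s \<omega> \<notin> D" using badAB[of i] w by auto
      have "t (Suc i) \<le> t j" using tle[of "Suc i" j] False w by auto
      moreover have "0 \<le> s" using t0[of i] w s by auto
      ultimately show False using s gj unfolding Good_def by auto
    qed
  qed
  have U1M: "(\<Union>i<k. A i \<inter> B i) \<in> sets M" using AM BM by auto
  have U2M: "(\<Union>i\<in>{..k}. C i) \<in> sets M" using CM by auto
  have "measure M E = measure M (\<Union>i<k. A i \<inter> B i) + measure M (\<Union>i\<in>{..k}. C i)"
    unfolding Eeq by (rule finite_measure_Union[OF U1M U2M d3])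
  also have "measure M (\<Union>i<k. A i \<inter> B i) = (\<Sum>i<k. measure M (A i \<inter> B i))"
    by (rule finite_measure_finite_Union) (use AM BM d1 in auto)
  also have "measure M (\<Union>i\<in>{..k}. C i) = (\<Sum>i\<le>k. measure M (C i))"
    by (rule finite_measure_finite_Union) (use CM d2 in auto)
  also have "(\<Sum>i<k. measure M (A i \<inter> B i)) =
      (\<Sum>i<k. \<integral>\<zeta>. q i \<zeta> \<partial>(density (distr M borel (z (t i))) (\<lambda>\<zeta>. ennreal (\<Psi> i \<zeta>))))"
  proof (rule sum.cong[OF refl])
    fix i assume "i \<in> {..<k}"
    then have i: "i < k" by simp
    have ti: "t i \<in> {0..T}" using t0[of i] tT[of i] i by auto
    have mk: "AE \<omega> in M. real_cond_exp M (vimage_algebra (space M) (z (t i)) borel) (indicator (A i \<inter> B i)) \<omega> =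
          real_cond_exp M (vimage_algebra (space M) (z (t i)) borel) (indicator (A i)) \<omega> *
          real_cond_exp M (vimage_algebra (space M) (z (t i)) borel) (indicator (B i)) \<omega>"
      using assms(4) ti Apast[of i] Bfut[OF i] i unfolding markov_on_def by auto
    have cA: "cond_prob_fn M (z (t i)) (A i) (\<Psi> i)" using assms(9) i unfolding A_def by auto
    have cB: "cond_prob_fn M (z (t i)) (B i) (q i)" using assms(10) i unfolding B_def by auto
    show "measure M (A i \<inter> B i) = (\<integral>\<zeta>. q i \<zeta> \<partial>(density (distr M borel (z (t i))) (\<lambda>\<zeta>. ennreal (\<Psi> i \<zeta>))))"
      by (rule markov_step[OF P zm[OF ti] AM[of i] BM[OF i] cA cB mk]) (use i in auto)
  qed
  finally show ?thesis unfolding E_def C_def by simp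
qed

end
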